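(* Let $d=\mu_+-\mu_-$. For every $\epsilon\in[0,d/2]$ and every $K\in(1,B_K(\epsilon)]$, where $B_K(\epsilon)=\min\{\exp((d-2\epsilon)^2/2),\ d/\epsilon-1\}$ ($d/\epsilon:=+\infty$ if $\epsilon=0$), $$\mathbb E\big[|X-\theta^{(\epsilon)}_{\mathrm r}|\big]\;\ge\;\mathbb E\big[|X-\theta^*|\big]\;\ge\;\mathbb E\big[|X-\theta_{\mathrm f}|\big].$$ Moreover, $\theta_{\mathrm f}=\operatorname{argmin}_{\theta\in[\mu_-,\mu_+]}\mathbb E\big[|X-\theta|\big]$, i.e. the fair threshold minimizes the average distance to the decision boundary over all thresholds in $[\mu_-,\mu_+]$.
   Context: Setting (one-dimensional Gaussian mixture). Fix real numbers $\mu_-<\mu_+$ and $K>1$, and let $d=\mu_+-\mu_-$. Let $(X,Y)$ be a random pair with $\Pr(Y=1)=\Pr(Y=-1)=\tfrac12$, $X\mid Y=-1\sim\mathcal N(\mu_-,1)$, and $X\mid Y=1\sim\mathcal N(\mu_+,K^2)$; expectations are over this joint distribution. For $\theta\in\mathbb R$, $f_\theta(x)=1$ if $x>\theta$ and $f_\theta(x)=-1$ otherwise; the distance of $X$ to the decision boundary of $f_\theta$ is $|X-\theta|$. Class-conditional errors: $e_+(\theta)=\Pr(X\le\theta\mid Y=1)$, $e_-(\theta)=\Pr(X>\theta\mid Y=-1)$. Natural error: $R_{\mathrm{nat}}(\theta)=\tfrac12 e_+(\theta)+\tfrac12 e_-(\theta)$. For $\epsilon\ge0$, robust error: $R_{\mathrm{rob}}^{\epsilon}(\theta)=\tfrac12\Pr(X\le\theta+\epsilon\mid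 Y=1)+\tfrac12\Pr(X>\theta-\epsilon\mid Y=-1)$. Optimal models: $\theta^*$ minimizes $R_{\mathrm{nat}}$ over $[\mu_-,\mu_+]$; $\theta_{\mathrm f}$ is the threshold in $[\mu_-,\mu_+]$ with $e_+(\theta_{\mathrm f})=e_-(\theta_{\mathrm f})$; $\theta^{(\epsilon)}_{\mathrm r}$ minimizes $R^{\epsilon}_{\mathrm{rob}}$ over $[\mu_-,\mu_+]$. *)

theory Defs
  imports "HOL-Probability.Probability"
begin

definition cond_law :: "real \<Rightarrow> real \<Rightarrow> real measure" where
  "cond_law m s = density lborel (normal_density m s)"

(* Marginal law of X: (1/2) N(mu_-, 1) + (1/2) N(mu_+, K^2). *)
definition mix_law :: "real \<Rightarrow> real \<Rightarrow> real \<Rightarrow> real measure" where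
  "mix_law mm mp K = density lborel
     (\<lambda>x. (1/2) * normal_density mm 1 x + (1/2) * normal_density mp K x)"

(* e_+(theta) = Pr(X <= theta | Y = 1) *)
definition e_plus :: "real \<Rightarrow> real \<Rightarrow> real \<Rightarrow> real" where
  "e_plus mp K \<theta> = measure (cond_law mp K) {..\<theta>}"

(* e_-(theta) = Pr(X > theta | Y = -1) *)
definition e_minus :: "real \<Rightarrow> real \<Rightarrow> real" where
  "e_minus mm \<theta> = measure (cond_law mm 1) {\<theta><..}"

definition R_nat :: "real \<Rightarrow> real \<Rightarrow> real \<Rightarrow> real \<Rightarrow> real" where
  "R_nat mm mp K \<theta> = (1/2) * e_plus mp K \<theta> + (1/2) * e_minus mm \<theta>"

definition R_rob :: "real \<Rightarrow> real \<Rightarrow> real \<Rightarrow> real \<Rightarrow> real \<Rightarrow> real" where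
  "R_rob mm mp K \<epsilon> \<theta> =
     (1/2) * measure (cond_law mp K) {..\<theta> + \<epsilon>} + (1/2) * measure (cond_law mm 1) {\<theta> - \<epsilon><..}"

definition avg_dist :: "real \<Rightarrow> real \<Rightarrow> real \<Rightarrow> real \<Rightarrow> real" where
  "avg_dist mm mp K \<theta> = (\<integral>x. \<bar>x - \<theta>\<bar> \<partial>mix_law mm mp K)"

definition is_min_on :: "(real \<Rightarrow> real) \<Rightarrow> real set \<Rightarrow> real \<Rightarrow> bool" where
  "is_min_on f S x \<longleftrightarrow> x \<in> S \<and> (\<forall>y\<in>S. f x \<le> f y)"

definition B_K :: "real \<Rightarrow> real \<Rightarrow> real" where
  "B_K d \<epsilon> = (if \<epsilon> = 0 then exp (d\<^sup>2 / 2)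
                 else min (exp ((d - 2 * \<epsilon>)\<^sup>2 / 2)) (d / \<epsilon> - 1))"

end

theory Submission
  imports Defs
begin

lemma nd_cont: "0 < s \<Longrightarrow> continuous_on A (normal_density m s)"
  unfolding normal_density_def by (intro continuous_intros) auto

lemma meas_Ioc:
  assumes "0 < s" "a \<le> b"
  shows "measure (cond_law m s) {a<..b} = integral {a..b} (normal_density m s)"
proof -
  have int: "integrable lborel (\<lambda>x. normal_density m s x * indicator {a<..b} x)"
    using assms by (intro integrable_real_mult_indicator) auto
  have "measure (cond_law m s) {a<..b} = enn2real (\<integral>\<^sup>+x. ennreal (normal_density m s x * indicator {a<..b} x) \<partial>lborel)"
    unfolding measure_def cond_law_def by (subst emeasure_density) (auto simp: ennreal_mult' ennreal_indicator)
  also have "\<dots> = (\<integral>x. normal_density m s x * indicator {a<..b} x \<partial>lborel)"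
    using int by (subst nn_integral_eq_integral) auto
  also have "\<dots> = (LINT x : {a<..b} | lborel. normal_density m s x)"
    unfolding set_lebesgue_integral_def by (simp add: mult.commute)
  also have "\<dots> = (LBINT x=a..b. normal_density m s x)"
    using assms by (simp add: interval_integral_Ioc)
  also have "\<dots> = integral {a..b} (normal_density m s)"
    using assms by (intro interval_integral_eq_integral borel_integrable_atLeastAtMost' nd_cont) auto
  finally show ?thesis .
qed

lemma rd: "0 < s \<Longrightarrow> real_distribution (cond_law m s)"
  unfolding real_distribution_def real_distribution_axioms_def cond_law_def
  by (simp add: prob_space_normal_density)

lemma cdf_Ioc:
  assumes "0 < s" "a \<le> b"
  shows "cdf (cond_law m s) b = cdf (cond_law m s) a + integral {a..b} (normal_density m s)"
proof (cases "a = b")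
  case True then show ?thesis by simp
next
  case False
  interpret real_distribution "cond_law m s" using assms(1) by (rule rd)
  show ?thesis using cdf_diff_eq[of a b] meas_Ioc[OF assms] False assms by simp
qed

lemma cdf_deriv:
  assumes "0 < s"
  shows "(cdf (cond_law m s) has_real_derivative normal_density m s x) (at x)"
proof -
  let ?F = "\<lambda>u. cdf (cond_law m s) (x-1) + integral {x-1..u} (normal_density m s)"
  have "((\<lambda>u. integral {x-1..u} (normal_density m s)) has_vector_derivative normal_density m s x) (at x within {x-1..x+1})"
    by (rule integral_has_vector_derivative) (auto intro: nd_cont assms)
  then have "((\<lambda>u. integral {x-1..u} (normal_density m s)) has_real_derivative normal_density m s x) (at x)"
    using at_within_interior[of x "{x-1..x+1}"] by (simp add: has_real_derivative_iff_has_vector_derivative)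
  then have "(?F has_real_derivative normal_density m s x) (at x)"
    by (auto intro!: derivative_eq_intros)
  then show ?thesis
    by (rule has_field_derivative_transform_within_open[where S="{x-1<..<x+1}"])
       (auto intro!: cdf_Ioc[OF assms, symmetric])
qed

lemma cdf_deriv_chain[derivative_intros]:
  assumes "0 < s" "(g has_real_derivative g') (at x)"
  shows "((\<lambda>x. cdf (cond_law m s) (g x)) has_real_derivative normal_density m s (g x) * g') (at x)"
  using DERIV_chain2[OF cdf_deriv[OF assms(1)] assms(2)] .

abbreviation G :: "real \<Rightarrow> real" where "G \<equiv> cdf (cond_law 0 1)"

lemma nd_scale: "0 < s \<Longrightarrow> normal_density m s x = std_normal_density ((x - m) / s) / s"
  unfolding normal_density_def
  by (simp add: real_sqrt_mult power_divide)

lemma lin_at_bot: "0 < s \<Longrightarrow> filterlim (\<lambda>x::real. (x - m) / s) at_bot at_bot"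
  unfolding filterlim_at_bot eventually_at_bot_linorder
proof
  fix Z :: real assume "0 < s"
  show "\<exists>N. \<forall>x\<le>N. (x - m) / s \<le> Z"
    using \<open>0 < s\<close> by (intro exI[of _ "m + s * Z"]) (auto simp: field_simps)
qed

lemma G_scale:
  assumes "0 < s"
  shows "cdf (cond_law m s) x = G ((x - m) / s)"
proof -
  let ?f = "\<lambda>x. cdf (cond_law m s) x - G ((x - m) / s)"
  have d: "DERIV ?f x :> 0" for x
  proof -
    have "DERIV ?f x :> normal_density m s x - std_normal_density ((x - m) / s) * (1 / s)"
      using assms by (auto intro!: derivative_eq_intros cdf_deriv simp: nd_cont)
    then show ?thesis using nd_scale[OF assms] by simp
  qed
  have c: "?f y = ?f x" for y using DERIV_isconst_all[of ?f] d by blast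
  interpret A: real_distribution "cond_law m s" using assms by (rule rd)
  interpret B: real_distribution "cond_law 0 1" by (rule rd) simp
  have "(?f \<longlongrightarrow> 0 - 0) at_bot"
    by (intro tendsto_diff A.cdf_lim_at_bot filterlim_compose[OF B.cdf_lim_at_bot lin_at_bot[OF assms]])
  moreover have "(?f \<longlongrightarrow> ?f x) at_bot"
  proof -
    have e: "?f = (\<lambda>_. ?f x)" by (rule ext) (rule c)
    show ?thesis by (subst e) (rule tendsto_const)
  qed
  ultimately have "0 - 0 = ?f x" by (rule tendsto_unique[rotated]) simp
  then show ?thesis by simp
qed

lemma G_sym: "G (- u) = 1 - G u"
proof -
  let ?f = "\<lambda>u. G u + G (- u)"
  have d: "DERIV ?f x :> 0" for x
  proof -
    have "DERIV ?f x :> std_normal_density x + std_normal_density (-x) * (-1)"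
      by (auto intro!: derivative_eq_intros cdf_deriv simp: nd_cont)
    then show ?thesis by (simp add: std_normal_density_def)
  qed
  have c: "?f y = ?f x" for y x using DERIV_isconst_all[of ?f] d by blast
  interpret B: real_distribution "cond_law 0 1" by (rule rd) simp
  have "(?f \<longlongrightarrow> 0 + 1) at_bot"
    by (intro tendsto_add B.cdf_lim_at_bot filterlim_compose[OF B.cdf_lim_at_top_prob filterlim_uminus_at_top_at_bot])
  moreover have "(?f \<longlongrightarrow> ?f u) at_bot"
  proof -
    have e: "?f = (\<lambda>_. ?f u)" by (rule ext) (rule c)
    show ?thesis by (subst e) (rule tendsto_const)
  qed
  ultimately have "0 + 1 = ?f u" by (rule tendsto_unique[rotated]) simp
  then show ?thesis by simp
qed

lemma G_strict: "u < v \<Longrightarrow> G u < G v"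
  by (rule DERIV_pos_imp_increasing[of u v G]) (metis cdf_deriv normal_density_pos zero_less_one)+

lemma G_mono: "u \<le> v \<Longrightarrow> G u \<le> G v"
  using G_strict[of u v] by (cases "u = v") auto

lemma meas_Ioi:
  assumes "0 < s"
  shows "measure (cond_law m s) {t<..} = 1 - cdf (cond_law m s) t"
proof -
  interpret real_distribution "cond_law m s" using assms by (rule rd)
  have "{t<..} = space (cond_law m s) - {..t}" by auto
  then have "prob {t<..} = prob (space (cond_law m s) - {..t})" by simp
  also have "\<dots> = 1 - prob {..t}" by (rule prob_compl) simp
  finally show ?thesis by (simp add: cdf_def)
qed

lemma int_abs_lborel:
  assumes "0 < s"
  shows "integrable lborel (\<lambda>x. normal_density m s x * \<bar>x - t\<bar>)"
proof (rule Bochner_Integration.integrable_bound[where f="\<lambda>x. normal_density m s x * \<bar>x - m\<bar> ^ 1 + \<bar>m - t\<bar> * normal_density m s x"])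
  show "integrable lborel (\<lambda>x. normal_density m s x * \<bar>x - m\<bar> ^ 1 + \<bar>m - t\<bar> * normal_density m s x)"
    using assms by (intro Bochner_Integration.integrable_add Bochner_Integration.integrable_mult_right integrable_normal_moment_abs integrable_normal_density)
  show "AE x in lborel. norm (normal_density m s x * \<bar>x - t\<bar>) \<le> norm (normal_density m s x * \<bar>x - m\<bar> ^ 1 + \<bar>m - t\<bar> * normal_density m s x)"
  proof (intro AE_I2)
    fix x
    have n: "0 \<le> normal_density m s x" by simp
    have "normal_density m s x * \<bar>x - t\<bar> \<le> normal_density m s x * (\<bar>x - m\<bar> + \<bar>m - t\<bar>)"
      by (intro mult_left_mono n) linarith
    then show "norm (normal_density m s x * \<bar>x - t\<bar>) \<le> norm (normal_density m s x * \<bar>x - m\<bar> ^ 1 + \<bar>m - t\<bar> * normal_density m s x)"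
      using n by (simp add: algebra_simps)
  qed
qed simp

lemma int_abs:
  assumes "0 < s"
  shows "integrable (cond_law m s) (\<lambda>x. \<bar>x - t\<bar>)"
  unfolding cond_law_def
  by (subst integrable_density) (auto simp: int_abs_lborel[OF assms])

lemma A_bound1:
  assumes "0 < s" "t1 < t2"
  shows "(\<integral>x. \<bar>x - t2\<bar> \<partial>cond_law m s) - (\<integral>x. \<bar>x - t1\<bar> \<partial>cond_law m s)
     \<ge> (t2 - t1) * (cdf (cond_law m s) t1 + cdf (cond_law m s) ((t1 + t2) / 2) - 1)"
proof -
  let ?M = "cond_law m s" let ?c = "(t1 + t2) / 2"
  interpret real_distribution ?M using assms(1) by (rule rd)
  have "(\<integral>x. (t2 - t1) * (indicator {..t1} x - indicator {?c<..} x) \<partial>?M) \<le> (\<integral>x. \<bar>x - t2\<bar> - \<bar>x - t1\<bar> \<partial>?M)"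
    using assms by (intro integral_mono Bochner_Integration.integrable_mult_right Bochner_Integration.integrable_diff int_abs integrable_real_indicator)
      (auto split: split_indicator simp: less_top[symmetric])
  also have "\<dots> = (\<integral>x. \<bar>x - t2\<bar> \<partial>?M) - (\<integral>x. \<bar>x - t1\<bar> \<partial>?M)"
    using assms by (intro Bochner_Integration.integral_diff int_abs)
  finally have *: "(\<integral>x. (t2 - t1) * (indicator {..t1} x - indicator {?c<..} x) \<partial>?M) \<le> (\<integral>x. \<bar>x - t2\<bar> \<partial>?M) - (\<integral>x. \<bar>x - t1\<bar> \<partial>?M)" .
  have "(\<integral>x. (t2 - t1) * (indicator {..t1} x - indicator {?c<..} x) \<partial>?M) = (t2 - t1) * (measure ?M {..t1} - measure ?M {?c<..})"
    by (subst integral_mult_right_zero, subst Bochner_Integration.integral_diff) (auto simp: less_top[symmetric])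
  also have "\<dots> = (t2 - t1) * (cdf ?M t1 + cdf ?M ?c - 1)"
    by (simp only: meas_Ioi[OF assms(1)]) (simp add: cdf_def algebra_simps)
  finally show ?thesis using * by linarith
qed

lemma A_bound2:
  assumes "0 < s" "t1 < t2"
  shows "(\<integral>x. \<bar>x - t1\<bar> \<partial>cond_law m s) - (\<integral>x. \<bar>x - t2\<bar> \<partial>cond_law m s)
     \<ge> (t2 - t1) * (1 - cdf (cond_law m s) t2 - cdf (cond_law m s) ((t1 + t2) / 2))"
proof -
  let ?M = "cond_law m s" let ?c = "(t1 + t2) / 2"
  interpret real_distribution ?M using assms(1) by (rule rd)
  have "(\<integral>x. (t2 - t1) * (indicator {t2<..} x - indicator {..?c} x) \<partial>?M) \<le> (\<integral>x. \<bar>x - t1\<bar> - \<bar>x - t2\<bar> \<partial>?M)"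
    using assms by (intro integral_mono Bochner_Integration.integrable_mult_right Bochner_Integration.integrable_diff int_abs integrable_real_indicator)
      (auto split: split_indicator simp: less_top[symmetric])
  also have "\<dots> = (\<integral>x. \<bar>x - t1\<bar> \<partial>?M) - (\<integral>x. \<bar>x - t2\<bar> \<partial>?M)"
    using assms by (intro Bochner_Integration.integral_diff int_abs)
  finally have *: "(\<integral>x. (t2 - t1) * (indicator {t2<..} x - indicator {..?c} x) \<partial>?M) \<le> (\<integral>x. \<bar>x - t1\<bar> \<partial>?M) - (\<integral>x. \<bar>x - t2\<bar> \<partial>?M)" .
  have "(\<integral>x. (t2 - t1) * (indicator {t2<..} x - indicator {..?c} x) \<partial>?M) = (t2 - t1) * (measure ?M {t2<..} - measure ?M {..?c})"
    by (subst integral_mult_right_zero, subst Bochner_Integration.integral_diff) (auto simp: less_top[symmetric])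
  also have "\<dots> = (t2 - t1) * (1 - cdf ?M t2 - cdf ?M ?c)"
    by (simp only: meas_Ioi[OF assms(1)]) (simp add: cdf_def algebra_simps)
  finally show ?thesis using * by linarith
qed

definition AD :: "real \<Rightarrow> real \<Rightarrow> real \<Rightarrow> real" where
  "AD m s t = (\<integral>x. \<bar>x - t\<bar> \<partial>cond_law m s)"

lemma AD_lborel: "0 < s \<Longrightarrow> AD m s t = (\<integral>x. normal_density m s x * \<bar>x - t\<bar> \<partial>lborel)"
  unfolding AD_def cond_law_def by (subst integral_density) auto

lemma avg_split:
  assumes "0 < K"
  shows "avg_dist mm mp K t = AD mm 1 t / 2 + AD mp K t / 2"
proof -
  have "avg_dist mm mp K t = (\<integral>x. ((1/2) * normal_density mm 1 x + (1/2) * normal_density mp K x) * \<bar>x - t\<bar> \<partial>lborel)"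
    unfolding avg_dist_def mix_law_def by (subst integral_density) auto
  also have "\<dots> = (\<integral>x. (1/2) * (normal_density mm 1 x * \<bar>x - t\<bar>) + (1/2) * (normal_density mp K x * \<bar>x - t\<bar>) \<partial>lborel)"
    by (simp add: algebra_simps)
  also have "\<dots> = (1/2) * (\<integral>x. normal_density mm 1 x * \<bar>x - t\<bar> \<partial>lborel) + (1/2) * (\<integral>x. normal_density mp K x * \<bar>x - t\<bar> \<partial>lborel)"
    using assms by (simp add: Bochner_Integration.integral_add int_abs_lborel)
  finally show ?thesis using assms by (simp add: AD_lborel)
qed

definition FF :: "real \<Rightarrow> real \<Rightarrow> real \<Rightarrow> real \<Rightarrow> real" where
  "FF mm mp K t = G (t - mm) / 2 + G ((t - mp) / K) / 2"

lemma FF_strict: "0 < K \<Longrightarrow> t < u \<Longrightarrow> FF mm mp K t < FF mm mp K u"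
  unfolding FF_def using G_strict[of "t - mm" "u - mm"] G_strict[of "(t - mp)/K" "(u - mp)/K"]
  by (simp add: divide_strict_right_mono)

lemma half_comb: "(p::real) \<le> x2 - x1 \<Longrightarrow> q \<le> y2 - y1 \<Longrightarrow> (p + q) / 2 \<le> x2 / 2 + y2 / 2 - (x1 / 2 + y1 / 2)"
  by (simp add: field_simps)

lemma avg_lower1:
  assumes "0 < K" "t1 < t2"
  shows "avg_dist mm mp K t2 - avg_dist mm mp K t1 \<ge> (t2 - t1) * (FF mm mp K t1 + FF mm mp K ((t1+t2)/2) - 1)"
proof -
  let ?c = "(t1+t2)/2"
  have a: "AD mm 1 t2 - AD mm 1 t1 \<ge> (t2 - t1) * (G (t1 - mm) + G (?c - mm) - 1)"
    using A_bound1[OF zero_less_one assms(2), of mm] G_scale[OF zero_less_one, of mm] unfolding AD_def by simp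
  have b: "AD mp K t2 - AD mp K t1 \<ge> (t2 - t1) * (G ((t1 - mp)/K) + G ((?c - mp)/K) - 1)"
    using A_bound1[OF assms, of mp] G_scale[OF assms(1), of mp] unfolding AD_def by simp
  have e: "(t2 - t1) * (FF mm mp K t1 + FF mm mp K ?c - 1) = ((t2 - t1) * (G (t1 - mm) + G (?c - mm) - 1) + (t2 - t1) * (G ((t1 - mp)/K) + G ((?c - mp)/K) - 1)) / 2"
    unfolding FF_def by (simp add: field_simps)
  show ?thesis unfolding avg_split[OF assms(1)] e by (rule half_comb[OF a b])
qed

lemma avg_lower2:
  assumes "0 < K" "t1 < t2"
  shows "avg_dist mm mp K t1 - avg_dist mm mp K t2 \<ge> (t2 - t1) * (1 - FF mm mp K t2 - FF mm mp K ((t1+t2)/2))"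
proof -
  let ?c = "(t1+t2)/2"
  have a: "AD mm 1 t1 - AD mm 1 t2 \<ge> (t2 - t1) * (1 - G (t2 - mm) - G (?c - mm))"
    using A_bound2[OF zero_less_one assms(2), of mm] G_scale[OF zero_less_one, of mm] unfolding AD_def by simp
  have b: "AD mp K t1 - AD mp K t2 \<ge> (t2 - t1) * (1 - G ((t2 - mp)/K) - G ((?c - mp)/K))"
    using A_bound2[OF assms, of mp] G_scale[OF assms(1), of mp] unfolding AD_def by simp
  have e: "(t2 - t1) * (1 - FF mm mp K t2 - FF mm mp K ?c) = ((t2 - t1) * (1 - G (t2 - mm) - G (?c - mm)) + (t2 - t1) * (1 - G ((t2 - mp)/K) - G ((?c - mp)/K))) / 2"
    unfolding FF_def by (simp add: field_simps)
  show ?thesis unfolding avg_split[OF assms(1)] e by (rule half_comb[OF a b])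
qed

lemma avg_incr:
  assumes "0 < K" "t1 < t2" "FF mm mp K t1 \<ge> 1/2"
  shows "avg_dist mm mp K t1 < avg_dist mm mp K t2"
proof -
  have "FF mm mp K t1 < FF mm mp K ((t1+t2)/2)" using assms by (intro FF_strict) auto
  then have "0 < (t2 - t1) * (FF mm mp K t1 + FF mm mp K ((t1+t2)/2) - 1)"
    using assms by (intro mult_pos_pos) auto
  then show ?thesis using avg_lower1[OF assms(1,2), of mm mp] by linarith
qed

lemma avg_decr:
  assumes "0 < K" "t1 < t2" "FF mm mp K t2 \<le> 1/2"
  shows "avg_dist mm mp K t2 < avg_dist mm mp K t1"
proof -
  have "FF mm mp K ((t1+t2)/2) < FF mm mp K t2" using assms by (intro FF_strict) auto
  then have "0 < (t2 - t1) * (1 - FF mm mp K t2 - FF mm mp K ((t1+t2)/2))"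
    using assms by (intro mult_pos_pos) auto
  then show ?thesis using avg_lower2[OF assms(1,2), of mm mp] by linarith
qed

definition Rg :: "real \<Rightarrow> real \<Rightarrow> real \<Rightarrow> real \<Rightarrow> real" where
  "Rg K a b t = G ((t - b) / K) / 2 + G (a - t) / 2"

definition hg :: "real \<Rightarrow> real \<Rightarrow> real \<Rightarrow> real \<Rightarrow> real" where
  "hg K a b t = (t - a)\<^sup>2 / 2 - ((t - b) / K)\<^sup>2 / 2 - ln K"

lemma Rg_deriv:
  assumes "0 < K"
  shows "DERIV (Rg K a b) t :> (exp (- ((t - b) / K)\<^sup>2 / 2) / K - exp (- (t - a)\<^sup>2 / 2)) / (2 * sqrt (2 * pi))"
proof -
  have "DERIV (Rg K a b) t :> std_normal_density ((t - b) / K) * (1 / K) / 2 + std_normal_density (a - t) * (0 - 1) / 2"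
    unfolding Rg_def using assms by (auto intro!: derivative_eq_intros)
  moreover have "(a - t)\<^sup>2 = (t - a)\<^sup>2" by (simp add: power2_commute)
  ultimately show ?thesis using assms by (simp add: std_normal_density_def field_simps)
qed

lemma D_sign_aux:
  fixes A B K c :: real
  assumes "0 < K" "0 < c"
  shows "((exp A / K - exp B) / c < 0 \<longleftrightarrow> A - ln K < B) \<and> ((exp A / K - exp B) / c > 0 \<longleftrightarrow> A - ln K > B)"
proof -
  have P: "exp A / K = exp (A - ln K)" using assms by (subst exp_diff) simp
  show ?thesis using assms unfolding P by (simp add: divide_less_0_iff zero_less_divide_iff)
qed

lemma D_sign:
  assumes "0 < K"
  shows "((exp (- ((t - b) / K)\<^sup>2 / 2) / K - exp (- (t - a)\<^sup>2 / 2)) / (2 * sqrt (2 * pi)) < 0 \<longleftrightarrow> hg K a b t < 0)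
       \<and> ((exp (- ((t - b) / K)\<^sup>2 / 2) / K - exp (- (t - a)\<^sup>2 / 2)) / (2 * sqrt (2 * pi)) > 0 \<longleftrightarrow> hg K a b t > 0)"
  using D_sign_aux[OF assms, of "2 * sqrt (2 * pi)" "- ((t - b) / K)\<^sup>2 / 2" "- (t - a)\<^sup>2 / 2"]
  unfolding hg_def by auto

lemma Rg_cont: "0 < K \<Longrightarrow> continuous_on A (Rg K a b)"
  using Rg_deriv by (meson DERIV_isCont continuous_at_imp_continuous_on)

lemma Rg_decr:
  assumes "0 < K" "x < y" "\<And>t. x < t \<Longrightarrow> t < y \<Longrightarrow> hg K a b t < 0"
  shows "Rg K a b y < Rg K a b x"
  by (rule DERIV_neg_imp_decreasing_open[OF assms(2) _ Rg_cont[OF assms(1)]])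
     (use Rg_deriv[OF assms(1)] D_sign[OF assms(1)] assms(3) in blast)

lemma Rg_incr:
  assumes "0 < K" "x < y" "\<And>t. x < t \<Longrightarrow> t < y \<Longrightarrow> hg K a b t > 0"
  shows "Rg K a b x < Rg K a b y"
  by (rule DERIV_pos_imp_increasing_open[OF assms(2) _ Rg_cont[OF assms(1)]])
     (use Rg_deriv[OF assms(1)] D_sign[OF assms(1)] assms(3) in blast)

lemma hg_convex:
  assumes "1 \<le> K" "x \<le> t" "t \<le> y"
  shows "(y - x) * hg K a b t \<le> (y - t) * hg K a b x + (t - x) * hg K a b y"
proof -
  have eq: "(y - t) * hg K a b x + (t - x) * hg K a b y - (y - x) * hg K a b t
      = (1 - 1 / K\<^sup>2) / 2 * ((y - x) * (t - x) * (y - t))"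
    using assms unfolding hg_def by (simp add: field_simps power2_eq_square)
  have "1 / K\<^sup>2 \<le> 1" using assms by (simp add: field_simps)
  then have "0 \<le> (1 - 1 / K\<^sup>2) / 2 * ((y - x) * (t - x) * (y - t))"
    using assms by (intro mult_nonneg_nonneg) auto
  then show ?thesis using eq by linarith
qed

lemma e_plus_G: "0 < K \<Longrightarrow> e_plus mp K t = G ((t - mp) / K)"
  unfolding e_plus_def using G_scale[of K mp t] by (simp add: cdf_def)

lemma e_minus_G: "e_minus mm t = G (mm - t)"
proof -
  have "e_minus mm t = 1 - G (t - mm)"
    unfolding e_minus_def using meas_Ioi[of 1 mm t] G_scale[of 1 mm t] by simp
  also have "\<dots> = G (mm - t)" using G_sym[of "t - mm"] by simp
  finally show ?thesis .
qed

lemma R_nat_Rg: "0 < K \<Longrightarrow> R_nat mm mp K t = Rg K mm mp t"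
  unfolding R_nat_def Rg_def using e_plus_G[of K mp t] e_minus_G[of mm t] by simp

lemma R_rob_Rg: "0 < K \<Longrightarrow> R_rob mm mp K e t = Rg K (mm + e) (mp - e) t"
proof -
  assume K: "0 < K"
  have 1: "measure (cond_law mp K) {..t + e} = G ((t - (mp - e)) / K)"
    using G_scale[OF K, of mp "t + e"] by (simp add: cdf_def algebra_simps)
  have 2: "measure (cond_law mm 1) {t - e<..} = G (mm + e - t)"
    using e_minus_G[of mm "t - e"] unfolding e_minus_def by (simp add: algebra_simps)
  show ?thesis unfolding R_rob_def Rg_def 1 2 by simp
qed

lemma FF_e: "0 < K \<Longrightarrow> FF mm mp K t = (1 + e_plus mp K t - e_minus mm t) / 2"
  unfolding FF_def using e_plus_G[of K mp t] e_minus_G[of mm t] G_sym[of "mm - t"] by simp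

theorem theorem6p4:
  fixes mm mp K \<epsilon> \<theta>s \<theta>f \<theta>r :: real
  assumes "mm < mp" and "1 < K"
    and "0 \<le> \<epsilon>" and "\<epsilon> \<le> (mp - mm) / 2"
    and "K \<le> B_K (mp - mm) \<epsilon>"
    and "is_min_on (R_nat mm mp K) {mm..mp} \<theta>s"
    and "\<theta>f \<in> {mm..mp}" and "e_plus mp K \<theta>f = e_minus mm \<theta>f"
    and "is_min_on (R_rob mm mp K \<epsilon>) {mm..mp} \<theta>r"
  shows "avg_dist mm mp K \<theta>r \<ge> avg_dist mm mp K \<theta>s
    \<and> avg_dist mm mp K \<theta>s \<ge> avg_dist mm mp K \<theta>f
    \<and> {\<theta>. is_min_on (avg_dist mm mp K) {mm..mp} \<theta>} = {\<theta>f}"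
proof -
  define d where "d = mp - mm"
  have d0: "0 < d" using assms(1) by (simp add: d_def)
  have K0: "0 < K" using assms(2) by simp
  have lnK: "0 < ln K" using assms(2) by simp
  have KB: "K \<le> B_K d \<epsilon>" using assms(5) by (simp add: d_def)
  have ed: "2 * \<epsilon> \<le> d" using assms(4) by (simp add: d_def)
  have E: "\<epsilon> * (K + 1) \<le> d \<and> ln K \<le> d\<^sup>2 / 2"
  proof (cases "\<epsilon> = 0")
    case True
    then have "K \<le> exp (d\<^sup>2 / 2)" using KB by (simp add: B_K_def)
    then have "ln K \<le> ln (exp (d\<^sup>2 / 2))" using K0 by (subst ln_le_cancel_iff) auto
    then show ?thesis using True d0 by simp
  next
    case False
    then have ep: "0 < \<epsilon>" using assms(3) by simp
    have K1: "K \<le> exp ((d - 2 * \<epsilon>)\<^sup>2 / 2)" and K2: "K \<le> d / \<epsilon> - 1"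
      using KB False by (auto simp: B_K_def)
    have "K + 1 \<le> d / \<epsilon>" using K2 by simp
    then have 1: "\<epsilon> * (K + 1) \<le> d" using ep by (simp add: le_divide_eq mult.commute)
    have "(d - 2 * \<epsilon>)\<^sup>2 \<le> d\<^sup>2" using ed ep by (intro power_mono) auto
    then have "exp ((d - 2 * \<epsilon>)\<^sup>2 / 2) \<le> exp (d\<^sup>2 / 2)" by simp
    then have "K \<le> exp (d\<^sup>2 / 2)" using K1 by linarith
    then have "ln K \<le> ln (exp (d\<^sup>2 / 2))" using K0 by (subst ln_le_cancel_iff) auto
    then show ?thesis using 1 by simp
  qed
  have E1: "\<epsilon> * (K + 1) \<le> d" and E2: "ln K \<le> d\<^sup>2 / 2" using E by auto
  let ?h = "hg K mm mp"
  have hmm: "?h mm < 0"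
  proof -
    have "0 \<le> ((mm - mp) / K)\<^sup>2 / 2" by simp
    moreover have "?h mm = - (((mm - mp) / K)\<^sup>2 / 2) - ln K" by (simp add: hg_def)
    ultimately show ?thesis using lnK by linarith
  qed
  have hmp: "0 \<le> ?h mp" unfolding hg_def using E2 by (simp add: d_def)
  have hcont: "continuous_on {mm..mp} ?h" unfolding hg_def by (intro continuous_intros) (use K0 in auto)
  obtain c where c1: "mm \<le> c" and c2: "c \<le> mp" and hc: "?h c = 0"
    using IVT'[of ?h mm 0 mp, OF _ hmp _ hcont] hmm assms(1) by auto
  have mc: "mm < c" using c1 hc hmm by (cases "mm = c") auto
  have hneg: "?h t < 0" if "mm \<le> t" "t < c" for t
  proof -
    have "(c - mm) * ?h t \<le> (c - t) * ?h mm + (t - mm) * ?h c"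
      using hg_convex[of K mm t c] that assms(2) by simp
    moreover have "(c - t) * ?h mm < 0" using that hmm by (simp add: mult_pos_neg)
    ultimately have "(c - mm) * ?h t < 0" using hc by simp
    then show ?thesis using mc by (simp add: mult_less_0_iff)
  qed
  have hpos: "?h t > 0" if "c < t" for t
  proof -
    have "(t - mm) * ?h c \<le> (t - c) * ?h mm + (c - mm) * ?h t"
      using hg_convex[of K mm c t] that assms(2) c1 by simp
    moreover have "(t - c) * ?h mm < 0" using that hmm by (simp add: mult_pos_neg)
    ultimately have "(c - mm) * ?h t > 0" using hc by simp
    then show ?thesis using mc by (simp add: zero_less_mult_iff)
  qed
  have Rc: "R_nat mm mp K c < R_nat mm mp K t" if "t \<in> {mm..mp}" "t \<noteq> c" for t
  proof (cases "t < c")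
    case True
    then show ?thesis unfolding R_nat_Rg[OF K0]
      by (intro Rg_decr[OF K0 True]) (use hneg that in auto)
  next
    case False
    then have "c < t" using that by simp
    then show ?thesis unfolding R_nat_Rg[OF K0]
      by (intro Rg_incr[OF K0]) (use hpos in auto)
  qed
  have s_eq: "\<theta>s = c"
  proof (rule ccontr)
    assume "\<theta>s \<noteq> c"
    moreover have "\<theta>s \<in> {mm..mp}" "R_nat mm mp K \<theta>s \<le> R_nat mm mp K c"
      using assms(6) c1 c2 unfolding is_min_on_def by auto
    ultimately show False using Rc by fastforce
  qed
  have hc': "(c - mm)\<^sup>2 / 2 - ((mp - c) / K)\<^sup>2 / 2 - ln K = 0"
  proof -
    have "((c - mp) / K)\<^sup>2 = ((mp - c) / K)\<^sup>2"
      by (metis minus_diff_eq minus_divide_left power2_minus)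
    then show ?thesis using hc unfolding hg_def by simp
  qed
  have kb: "(mp - c) / K < c - mm"
  proof (rule power_less_imp_less_base[of _ 2])
    show "((mp - c) / K) ^ 2 < (c - mm) ^ 2" using hc' lnK by simp
  qed (use mc in simp)
  have f_le: "\<theta>f \<le> c"
  proof (rule ccontr)
    assume "\<not> \<theta>f \<le> c"
    then have cf: "c < \<theta>f" by simp
    have "G ((c - mp) / K) \<le> G ((\<theta>f - mp) / K)"
      using cf K0 by (intro G_mono divide_right_mono) auto
    moreover have "G (mm - c) < G ((c - mp) / K)"
    proof (rule G_strict)
      have "(c - mp) / K = - ((mp - c) / K)" by (simp add: minus_divide_left)
      then show "mm - c < (c - mp) / K" using kb by linarith
    qed
    moreover have "G (mm - \<theta>f) \<le> G (mm - c)" using cf by (intro G_mono) simp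
    ultimately have "e_minus mm \<theta>f < e_plus mp K \<theta>f"
      unfolding e_plus_G[OF K0] e_minus_G by linarith
    then show False using assms(8) by simp
  qed
  let ?h2 = "hg K (mm + \<epsilon>) (mp - \<epsilon>)"
  have eK: "\<epsilon> * K \<le> d - \<epsilon>" using E1 by (simp add: algebra_simps)
  have h2mm: "?h2 mm < 0"
  proof -
    have "\<epsilon> \<le> (d - \<epsilon>) / K" using eK K0 by (simp add: le_divide_eq)
    then have "\<epsilon>\<^sup>2 \<le> ((d - \<epsilon>) / K)\<^sup>2" using assms(3) by (intro power_mono) auto
    moreover have "((mm - (mp - \<epsilon>)) / K)\<^sup>2 = ((d - \<epsilon>) / K)\<^sup>2"
      by (simp add: d_def power2_eq_square field_simps)
    ultimately show ?thesis unfolding hg_def using lnK by simp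
  qed
  define a where "a = c - mm"
  define b where "b = mp - c"
  have a0: "0 < a" using mc by (simp add: a_def)
  have b0: "0 \<le> b" using c2 by (simp add: b_def)
  have dab: "d = a + b" by (simp add: a_def b_def d_def)
  have bK: "b < a * K" using kb K0 by (simp add: a_def b_def divide_less_eq)
  have f1: "b * K < a * K * K" using bK K0 by (simp add: mult_strict_right_mono)
  have f3: "\<epsilon> * (K + 1) * (K - 1) \<le> (a + b) * (K - 1)" using E1 dab assms(2) by (intro mult_right_mono) auto
  have f4: "0 \<le> a * (K - 1) * (K - 1)" using a0 assms(2) by (intro mult_nonneg_nonneg) auto
  have g1: "\<epsilon> * (K * K - 1) \<le> 2 * a * K * K - 2 * b"
  proof -
    have "\<epsilon> * (K * K - 1) = \<epsilon> * (K + 1) * (K - 1)" by (simp add: algebra_simps)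
    also have "\<dots> \<le> (a + b) * (K - 1)" by (rule f3)
    also have "\<dots> \<le> 2 * a * K * K - 2 * b"
      using f1 bK f4 by (simp add: algebra_simps)
    finally show ?thesis .
  qed
  have h2c: "?h2 c \<le> 0"
  proof -
    have hcab: "a\<^sup>2 / 2 - (b / K)\<^sup>2 / 2 - ln K = 0" using hc' by (simp add: a_def b_def)
    have "?h2 c = (a - \<epsilon>)\<^sup>2 / 2 - ((b - \<epsilon>) / K)\<^sup>2 / 2 - ln K"
      unfolding hg_def a_def b_def by (simp add: power2_eq_square field_simps)
    also have "\<dots> = (a - \<epsilon>)\<^sup>2 / 2 - ((b - \<epsilon>) / K)\<^sup>2 / 2 - ln K - (a\<^sup>2 / 2 - (b / K)\<^sup>2 / 2 - ln K)"
      using hcab by simp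
    also have "\<dots> = - \<epsilon> * (2 * a * K * K - 2 * b - \<epsilon> * (K * K - 1)) / (2 * K * K)"
      using K0 by (simp add: power2_eq_square field_simps)
    also have "\<dots> \<le> 0"
      using g1 assms(3) K0 by (intro divide_nonpos_pos mult_nonpos_nonneg) auto
    finally show ?thesis .
  qed
  have h2neg: "?h2 t < 0" if "mm \<le> t" "t < c" for t
  proof -
    have "(c - mm) * ?h2 t \<le> (c - t) * ?h2 mm + (t - mm) * ?h2 c"
      using hg_convex[of K mm t c] that assms(2) by simp
    moreover have "(c - t) * ?h2 mm < 0" using that h2mm by (simp add: mult_pos_neg)
    moreover have "(t - mm) * ?h2 c \<le> 0" using that h2c by (simp add: mult_nonneg_nonpos)
    ultimately have "(c - mm) * ?h2 t < 0" by linarith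
    then show ?thesis using mc by (simp add: mult_less_0_iff)
  qed
  have r_ge: "c \<le> \<theta>r"
  proof (rule ccontr)
    assume "\<not> c \<le> \<theta>r"
    then have rc: "\<theta>r < c" by simp
    have rin: "\<theta>r \<in> {mm..mp}" and rmin: "R_rob mm mp K \<epsilon> \<theta>r \<le> R_rob mm mp K \<epsilon> c"
      using assms(9) c1 c2 unfolding is_min_on_def by auto
    have "R_rob mm mp K \<epsilon> c < R_rob mm mp K \<epsilon> \<theta>r"
      unfolding R_rob_Rg[OF K0] by (intro Rg_decr[OF K0 rc]) (use h2neg rin in auto)
    then show False using rmin by simp
  qed
  have FFf: "FF mm mp K \<theta>f = 1/2" using FF_e[OF K0] assms(8) by simp
  have mono: "avg_dist mm mp K t1 \<le> avg_dist mm mp K t2" if "\<theta>f \<le> t1" "t1 \<le> t2" for t1 t2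
  proof (cases "t1 = t2")
    case False
    have "FF mm mp K \<theta>f \<le> FF mm mp K t1"
      using that FF_strict[OF K0, of \<theta>f t1 mm mp] by (cases "\<theta>f = t1") auto
    then show ?thesis using avg_incr[OF K0, of t1 t2 mm mp] that False FFf by simp
  qed simp
  have uniq: "avg_dist mm mp K \<theta>f < avg_dist mm mp K y" if "y \<noteq> \<theta>f" for y
  proof (cases "\<theta>f < y")
    case True then show ?thesis using avg_incr[OF K0 True] FFf by simp
  next
    case False
    then have "y < \<theta>f" using that by simp
    then show ?thesis using avg_decr[OF K0] FFf by simp
  qed
  have 1: "avg_dist mm mp K \<theta>r \<ge> avg_dist mm mp K \<theta>s"
    using mono[of \<theta>s \<theta>r] s_eq f_le r_ge by simp
  have 2: "avg_dist mm mp K \<theta>s \<ge> avg_dist mm mp K \<theta>f"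
    using mono[of \<theta>f \<theta>s] s_eq f_le by simp
  have 3: "{\<theta>. is_min_on (avg_dist mm mp K) {mm..mp} \<theta>} = {\<theta>f}"
  proof (intro set_eqI iffI)
    fix x assume "x \<in> {\<theta>. is_min_on (avg_dist mm mp K) {mm..mp} \<theta>}"
    then have "avg_dist mm mp K x \<le> avg_dist mm mp K \<theta>f" using assms(7) by (simp add: is_min_on_def)
    then show "x \<in> {\<theta>f}" using uniq[of x] by (cases "x = \<theta>f") auto
  next
    fix x assume "x \<in> {\<theta>f}"
    then show "x \<in> {\<theta>. is_min_on (avg_dist mm mp K) {mm..mp} \<theta>}"
      using assms(7) uniq by (auto simp: is_min_on_def less_imp_le) (metis order_refl uniq less_imp_le)
  qed
  show ?thesis using 1 2 3 by simp
qed

end
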